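(* For every integer $d>2$, $\gamma_{gr}^{L,d-1}(Q_d)=2^d-1$ and $\gamma_{gr}^{L,d-2}(Q_d)=2^d-2$.
   Context: $Q_d$ is the $d$-dimensional hypercube: vertices are the $0$-$1$ strings of length $d$, adjacent iff they differ in exactly one position. For a vertex $v$, $N(v)$ is its open neighborhood and $N[v]=N(v)\cup\{v\}$. A sequence $S=(v_1,\ldots,v_m)$ of distinct vertices is a $k$-$L$-sequence if for each $i$ there is $u_i\in N[v_i]$ such that the number of indices $j<i$ with $u_i\in N(v_j)$ is less than $k$. $\gamma_{gr}^{L,k}(G)$ is the maximum length of a $k$-$L$-sequence of $G$. *)

theory Defs
  imports Main
begin

definition open_nbhd :: "'a set \<Rightarrow> ('a \<Rightarrow> 'a \<Rightarrow> bool) \<Rightarrow> 'a \<Rightarrow> 'a set" where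
  "open_nbhd V adj v = {u \<in> V. adj v u}"

definition closed_nbhd :: "'a set \<Rightarrow> ('a \<Rightarrow> 'a \<Rightarrow> bool) \<Rightarrow> 'a \<Rightarrow> 'a set" where
  "closed_nbhd V adj v = insert v (open_nbhd V adj v)"

definition is_kL_sequence :: "'a set \<Rightarrow> ('a \<Rightarrow> 'a \<Rightarrow> bool) \<Rightarrow> nat \<Rightarrow> 'a list \<Rightarrow> bool" where
  "is_kL_sequence V adj k S \<longleftrightarrow>
     distinct S \<and> set S \<subseteq> V \<and>
     (\<forall>i < length S. \<exists>u \<in> closed_nbhd V adj (S ! i).
        card {j. j < i \<and> u \<in> open_nbhd V adj (S ! j)} < k)"

definition grundy_L_k :: "'a set \<Rightarrow> ('a \<Rightarrow> 'a \<Rightarrow> bool) \<Rightarrow> nat \<Rightarrow> nat" where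
  "grundy_L_k V adj k = Max {length S | S. is_kL_sequence V adj k S}"

definition hypercube_vertices :: "nat \<Rightarrow> bool list set" where
  "hypercube_vertices d = {xs. length xs = d}"

definition hypercube_adj :: "bool list \<Rightarrow> bool list \<Rightarrow> bool" where
  "hypercube_adj xs ys \<longleftrightarrow> length xs = length ys \<and>
     card {i. i < length xs \<and> xs ! i \<noteq> ys ! i} = 1"

end

theory Submission
  imports Defs
begin


definition flip :: "nat \<Rightarrow> bool list \<Rightarrow> bool list" where
  "flip p x = x[p := \<not> x ! p]"

definition TT :: "bool list \<Rightarrow> nat set" where
  "TT x = {i. i < length x \<and> x ! i}"

lemma flip_len[simp]: "length (flip p x) = length x"
  by (simp add: flip_def)

lemma flip_nth: "i < length x \<Longrightarrow> flip p x ! i = (if i = p then \<not> x ! i else x ! i)"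
  by (simp add: flip_def nth_list_update)

lemma flip_flip[simp]: "flip p (flip p x) = x"
  by (cases "p < length x") (simp_all add: flip_def list_update_overwrite list_update_beyond)

lemma adj_flip: assumes "p < length x" shows "hypercube_adj x (flip p x)"
proof -
  have "{i. i < length x \<and> x ! i \<noteq> flip p x ! i} = {p}"
    using assms by (auto simp: flip_nth split: if_splits)
  thus ?thesis by (simp add: hypercube_adj_def)
qed

lemma adj_sym: "hypercube_adj x y \<Longrightarrow> hypercube_adj y x"
proof -
  assume a: "hypercube_adj x y"
  hence eq: "{i. i < length y \<and> y ! i \<noteq> x ! i} = {i. i < length x \<and> x ! i \<noteq> y ! i}"
    by (auto simp: hypercube_adj_def)
  have "length y = length x" using a by (simp add: hypercube_adj_def)
  moreover have "card {i. i < length y \<and> y ! i \<noteq> x ! i} = 1"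
    using a eq unfolding hypercube_adj_def by metis
  ultimately show ?thesis unfolding hypercube_adj_def by blast
qed

lemma adj_irrefl: "\<not> hypercube_adj x x"
  unfolding hypercube_adj_def by simp

lemma adj_imp_flip: assumes "hypercube_adj y u" shows "\<exists>p < length u. y = flip p u"
proof -
  from assms have len: "length y = length u" and c: "card {i. i < length y \<and> y ! i \<noteq> u ! i} = 1"
    by (auto simp: hypercube_adj_def)
  from c obtain p where P: "{i. i < length y \<and> y ! i \<noteq> u ! i} = {p}" by (auto simp: card_Suc_eq)
  hence pl: "p < length u" using len by auto
  have "y = flip p u"
  proof (rule nth_equalityI)
    show "length y = length (flip p u)" using len by simp
    fix i assume i: "i < length y"
    show "y ! i = flip p u ! i"
    proof (cases "i = p")
      case True thus ?thesis using P i len by (auto simp: flip_nth)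
    next
      case False
      hence "i \<notin> {i. i < length y \<and> y ! i \<noteq> u ! i}" using P by auto
      thus ?thesis using False i len by (auto simp: flip_nth)
    qed
  qed
  thus ?thesis using pl by blast
qed

lemma flip_inj: "p < length u \<Longrightarrow> flip p u = flip q u \<Longrightarrow> p = q"
  by (metis flip_len flip_nth)

lemma TT_flip: "p < length x \<Longrightarrow> TT (flip p x) = (if x ! p then TT x - {p} else insert p (TT x))"
  by (cases "x ! p") (auto simp: TT_def flip_nth split: if_splits)

lemma TT_eq: "length x = length y \<Longrightarrow> TT x = TT y \<Longrightarrow> x = y"
  by (rule nth_equalityI) (auto simp: TT_def set_eq_iff)

lemma TT_fin[simp]: "finite (TT x)"
  by (simp add: TT_def)

lemma TT_sub: "TT x \<subseteq> {..<length x}" by (auto simp: TT_def)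

lemma TT_card: "card (TT x) \<le> length x"
  using card_mono[OF finite_lessThan TT_sub[of x]] by simp

lemma card_V: "card (hypercube_vertices d) = 2 ^ d"
proof -
  have "hypercube_vertices d = {xs. set xs \<subseteq> (UNIV::bool set) \<and> length xs = d}"
    by (simp add: hypercube_vertices_def)
  thus ?thesis using card_lists_length_eq[of "UNIV::bool set" d] by simp
qed

lemma fin_V: "finite (hypercube_vertices d)"
proof -
  have "hypercube_vertices d = {xs. set xs \<subseteq> (UNIV::bool set) \<and> length xs = d}"
    by (simp add: hypercube_vertices_def)
  thus ?thesis using finite_lists_length_eq[of "UNIV::bool set" d] by simp
qed


lemma key_seq:
  fixes S :: "bool list list" and f :: "bool list \<Rightarrow> nat"
  assumes dist: "distinct S" and sub: "set S \<subseteq> hypercube_vertices d"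
    and srt: "sorted (map f S)"
    and wit: "\<And>v. v \<in> set S \<Longrightarrow> \<exists>u. length u = d \<and> (u = v \<or> hypercube_adj v u) \<and>
       (\<exists>P \<subseteq> {..<d}. card P + k > d \<and>
          (\<forall>p\<in>P. flip p u \<notin> set S \<or> flip p u = v \<or> f (flip p u) > f v))"
  shows "is_kL_sequence (hypercube_vertices d) hypercube_adj k S"
  unfolding is_kL_sequence_def
proof (intro conjI allI impI dist sub)
  fix i assume i: "i < length S"
  define v where "v = S ! i"
  have vS: "v \<in> set S" using i v_def by simp
  obtain u P where ul: "length u = d" and uv: "u = v \<or> hypercube_adj v u"
    and P: "P \<subseteq> {..<d}" "card P + k > d"
    and Pp: "\<forall>p\<in>P. flip p u \<notin> set S \<or> flip p u = v \<or> f (flip p u) > f v"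
    using wit[OF vS] by blast
  have uN: "u \<in> closed_nbhd (hypercube_vertices d) hypercube_adj (S ! i)"
    using uv ul by (auto simp: closed_nbhd_def open_nbhd_def hypercube_vertices_def v_def)
  define J where "J = {j. j < i \<and> u \<in> open_nbhd (hypercube_vertices d) hypercube_adj (S ! j)}"
  have img: "(\<lambda>j. S ! j) ` J \<subseteq> (\<lambda>p. flip p u) ` ({..<d} - P)"
  proof
    fix y assume "y \<in> (\<lambda>j. S ! j) ` J"
    then obtain j where j: "j < i" and y: "y = S ! j"
      and adj: "hypercube_adj (S ! j) u" by (auto simp: J_def open_nbhd_def)
    obtain p where p: "p < length u" and yp: "y = flip p u"
      using adj_imp_flip[OF adj] y by blast
    have "p \<notin> P"
    proof
      assume "p \<in> P"
      hence "flip p u \<notin> set S \<or> flip p u = v \<or> f (flip p u) > f v" using Pp by blast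
      moreover have "flip p u \<in> set S" using yp y j i by (metis nth_mem less_trans)
      moreover have "flip p u \<noteq> v" using yp y j i dist v_def by (metis nth_eq_iff_index_eq less_trans less_irrefl)
      moreover have "f (flip p u) \<le> f v"
      proof -
        have "map f S ! j \<le> map f S ! i" using srt j i sorted_nth_mono[of "map f S" j i] by simp
        thus ?thesis using yp y v_def j i by simp
      qed
      ultimately show False by auto
    qed
    thus "y \<in> (\<lambda>p. flip p u) ` ({..<d} - P)" using p ul yp by auto
  qed
  have "inj_on (\<lambda>j. S ! j) J"
    using inj_on_nth[OF dist, of J] i by (auto simp: J_def)
  hence "card J = card ((\<lambda>j. S ! j) ` J)" by (simp add: card_image)
  also have "\<dots> \<le> card ((\<lambda>p. flip p u) ` ({..<d} - P))" by (rule card_mono[OF _ img]) simp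
  also have "\<dots> \<le> card ({..<d} - P)" by (rule card_image_le) simp
  also have "\<dots> = d - card P" using P(1) by (simp add: card_Diff_subset finite_subset)
  finally have cJ: "card J \<le> d - card P" .
  have "card P \<le> card {..<d}" using P(1) by (intro card_mono) auto
  hence "card P \<le> d" by simp
  hence "card J < k" using P(2) cJ by arith
  thus "\<exists>u\<in>closed_nbhd (hypercube_vertices d) hypercube_adj (S ! i).
          card {j. j < i \<and> u \<in> open_nbhd (hypercube_vertices d) hypercube_adj (S ! j)} < k"
    using uN J_def by blast
qed

lemma nbhd_card:
  assumes "length u = d"
  shows "card (open_nbhd (hypercube_vertices d) hypercube_adj u) = d"
proof -
  have "open_nbhd (hypercube_vertices d) hypercube_adj u = (\<lambda>p. flip p u) ` {..<d}"
  proof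
    show "open_nbhd (hypercube_vertices d) hypercube_adj u \<subseteq> (\<lambda>p. flip p u) ` {..<d}"
    proof
      fix y assume "y \<in> open_nbhd (hypercube_vertices d) hypercube_adj u"
      hence "hypercube_adj u y" by (simp add: open_nbhd_def)
      hence "hypercube_adj y u" by (rule adj_sym)
      then obtain p where "p < length u" "y = flip p u" using adj_imp_flip by blast
      thus "y \<in> (\<lambda>p. flip p u) ` {..<d}" using assms by blast
    qed
    show "(\<lambda>p. flip p u) ` {..<d} \<subseteq> open_nbhd (hypercube_vertices d) hypercube_adj u"
      using adj_flip assms by (auto simp: open_nbhd_def hypercube_vertices_def)
  qed
  moreover have "inj_on (\<lambda>p. flip p u) {..<d}"
    using flip_inj assms by (auto simp: inj_on_def)
  ultimately show ?thesis by (simp add: card_image)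
qed

lemma upper:
  assumes kl: "is_kL_sequence (hypercube_vertices d) hypercube_adj k S" and ne: "S \<noteq> []"
  shows "length S + d < k + 2 ^ d + 1"
proof -
  let ?V = "hypercube_vertices d"
  define i where "i = length S - 1"
  have i: "i < length S" using ne i_def by simp
  have dist: "distinct S" and sub: "set S \<subseteq> ?V" using kl by (auto simp: is_kL_sequence_def)
  obtain u where uN: "u \<in> closed_nbhd ?V hypercube_adj (S ! i)"
    and cJ: "card {j. j < i \<and> u \<in> open_nbhd ?V hypercube_adj (S ! j)} < k"
    using kl i by (auto simp: is_kL_sequence_def)
  define J where "J = {j. j < i \<and> u \<in> open_nbhd ?V hypercube_adj (S ! j)}"
  have uV: "u \<in> ?V" using uN sub i by (auto simp: closed_nbhd_def open_nbhd_def)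
  hence ul: "length u = d" by (simp add: hypercube_vertices_def)
  define N where "N = open_nbhd ?V hypercube_adj u"
  define Pf where "Pf = set (take i S)"
  have cN: "card N = d" using nbhd_card[OF ul] N_def by simp
  have cPf: "card Pf = i" using dist i Pf_def by (simp add: distinct_card)
  have PfV: "Pf \<subseteq> ?V" using sub Pf_def by (meson set_take_subset subset_trans)
  have "N \<inter> Pf \<subseteq> (\<lambda>j. S ! j) ` J"
  proof
    fix y assume y: "y \<in> N \<inter> Pf"
    then obtain j where j: "j < i" and yj: "y = S ! j" using i
      by (auto simp: Pf_def in_set_conv_nth)
    have "hypercube_adj u y" using y by (simp add: N_def open_nbhd_def)
    hence "hypercube_adj y u" by (rule adj_sym)
    hence "j \<in> J" using j yj uV by (simp add: J_def open_nbhd_def)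
    thus "y \<in> (\<lambda>j. S ! j) ` J" using yj by blast
  qed
  moreover have fJ: "finite J" by (rule finite_subset[of _ "{..<i}"]) (auto simp: J_def)
  ultimately have "card (N \<inter> Pf) \<le> card ((\<lambda>j. S ! j) ` J)"
    by (intro card_mono finite_imageI)
  also have "\<dots> \<le> card J" using fJ by (rule card_image_le)
  finally have c1: "card (N \<inter> Pf) < k" using cJ J_def by simp
  have fN: "finite N" using fin_V N_def by (simp add: open_nbhd_def)
  have "N - Pf \<subseteq> ?V - Pf" using N_def by (auto simp: open_nbhd_def)
  hence "card (N - Pf) \<le> card (?V - Pf)" using fin_V by (simp add: card_mono)
  also have "card (?V - Pf) = 2 ^ d - i" using PfV cPf card_V
    by (simp add: card_Diff_subset finite_subset fin_V)
  finally have c2: "card (N - Pf) \<le> 2 ^ d - i" .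
  have "N = (N \<inter> Pf) \<union> (N - Pf)" by blast
  moreover have "card ((N \<inter> Pf) \<union> (N - Pf)) = card (N \<inter> Pf) + card (N - Pf)"
    by (rule card_Un_disjoint) (use fN in auto)
  ultimately have "card N = card (N \<inter> Pf) + card (N - Pf)" by simp
  hence "d \<le> card (N \<inter> Pf) + (2 ^ d - i)" using cN c2 by linarith
  moreover have "card Pf \<le> card ?V" using PfV fin_V by (intro card_mono)
  hence "i \<le> 2 ^ d" using cPf card_V by simp
  ultimately show ?thesis using c1 i_def ne by (cases S) auto
qed


lemma TT_card_flip:
  assumes "p < length x"
  shows "card (TT (flip p x)) = (if x ! p then card (TT x) - 1 else card (TT x) + 1)"
proof -
  have pT: "p \<in> TT x \<longleftrightarrow> x ! p" using assms by (simp add: TT_def)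
  show ?thesis
  proof (cases "x ! p")
    case True
    hence "TT (flip p x) = TT x - {p}" using TT_flip[OF assms] by simp
    moreover have "card (TT x - {p}) = card (TT x) - 1" using pT True by (intro card_Diff_singleton) simp
    ultimately show ?thesis using True by simp
  next
    case False
    hence "TT (flip p x) = insert p (TT x)" using TT_flip[OF assms] by simp
    moreover have "card (insert p (TT x)) = card (TT x) + 1" using pT False
      by (subst card_insert_disjoint) simp_all
    ultimately show ?thesis using False by simp
  qed
qed

lemma TT_zero[simp]: "TT (replicate d False) = {}"
  by (simp add: TT_def)

lemma TT_empty_eq: "length x = d \<Longrightarrow> TT x = {} \<Longrightarrow> x = replicate d False"
  by (rule TT_eq) auto

definition x01 :: "nat \<Rightarrow> bool list" where
  "x01 d = True # True # replicate (d - 2) False"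

lemma x01_len: "d \<ge> 2 \<Longrightarrow> length (x01 d) = d"
  by (simp add: x01_def)

lemma TT_x01: assumes "d \<ge> 2" shows "TT (x01 d) = {0, 1}"
proof (rule set_eqI)
  fix i show "i \<in> TT (x01 d) \<longleftrightarrow> i \<in> {0, 1}"
  proof (cases "i < 2")
    case True then have "i = 0 \<or> i = 1" by auto
    thus ?thesis using assms by (auto simp: TT_def x01_def)
  next
    case False
    define m where "m = i - 2"
    have "i = Suc (Suc m)" using False m_def by simp
    thus ?thesis using assms by (auto simp: TT_def x01_def)
  qed
qed

lemma TT_x01_eq: "d \<ge> 2 \<Longrightarrow> length x = d \<Longrightarrow> TT x = {0, 1} \<Longrightarrow> x = x01 d"
  by (rule TT_eq) (auto simp: x01_len TT_x01)

lemma two_elems: assumes "finite A" "card A \<ge> 2" shows "\<exists>i j. i \<in> A \<and> j \<in> A \<and> i \<noteq> j"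
proof -
  have "card A > 0" using assms(2) by linarith
  hence "A \<noteq> {}" by (metis card.empty less_irrefl)
  then obtain i where i: "i \<in> A" by blast
  have "card (A - {i}) = card A - 1" using i by (rule card_Diff_singleton)
  hence "card (A - {i}) \<ge> 1" using assms(2) by linarith
  hence "A - {i} \<noteq> {}" by (metis card.empty not_one_le_zero)
  then obtain j where "j \<in> A - {i}" by blast
  thus ?thesis using i by blast
qed

lemma three_elems: assumes "finite A" "card A \<ge> 3"
  shows "\<exists>i j l. i \<in> A \<and> j \<in> A \<and> l \<in> A \<and> i \<noteq> j \<and> i \<noteq> l \<and> j \<noteq> l"
proof -
  have "card A > 0" using assms(2) by linarith
  hence "A \<noteq> {}" by (metis card.empty less_irrefl)
  then obtain i where i: "i \<in> A" by blast
  have "card (A - {i}) = card A - 1" using i by (rule card_Diff_singleton)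
  hence "card (A - {i}) \<ge> 2" using assms(2) by linarith
  then obtain j l where "j \<in> A - {i}" "l \<in> A - {i}" "j \<noteq> l"
    using two_elems[of "A - {i}"] assms by auto
  thus ?thesis using i by blast
qed

definition F1 :: "nat \<Rightarrow> nat \<Rightarrow> nat" where
  "F1 d t = (if odd t then 0 else d + 1 - t)"

definition f1 :: "nat \<Rightarrow> bool list \<Rightarrow> nat" where
  "f1 d x = F1 d (card (TT x))"

lemma F1_odd: "odd t \<Longrightarrow> F1 d t = 0"
  by (simp add: F1_def)

lemma F1_even: "even t \<Longrightarrow> F1 d t = d + 1 - t"
  by (simp add: F1_def)

lemma wit1:
  assumes d: "d > 2" and vl: "length v = d" and vz: "v \<noteq> replicate d False"
  shows "\<exists>u. length u = d \<and> (u = v \<or> hypercube_adj v u) \<and>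
       (\<exists>P \<subseteq> {..<d}. card P + (d - 1) > d \<and>
          (\<forall>p\<in>P. flip p u = v \<or> f1 d (flip p u) > f1 d v))"
proof (cases "odd (card (TT v))")
  case True
  have "\<forall>p\<in>{..<d}. f1 d (flip p v) > f1 d v"
  proof
    fix p assume "p \<in> {..<d}"
    hence p: "p < length v" using vl by simp
    have e: "even (card (TT v) - 1)" "even (card (TT v) + 1)" using True by presburger+
    have "even (card (TT (flip p v)))" using TT_card_flip[OF p] e
      by (cases "v ! p") simp_all
    moreover have "card (TT (flip p v)) \<le> d" using TT_card[of "flip p v"] vl by simp
    moreover have "f1 d (flip p v) = d + 1 - card (TT (flip p v))"
      unfolding f1_def by (rule F1_even) fact
    moreover have "f1 d v = 0" unfolding f1_def by (rule F1_odd[OF True])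
    ultimately show "f1 d (flip p v) > f1 d v" by linarith
  qed
  hence B: "\<forall>p\<in>{..<d}. flip p v = v \<or> f1 d (flip p v) > f1 d v" by blast
  show ?thesis
    apply (intro exI[of _ v] conjI exI[of _ "{..<d}"])
    subgoal using vl by simp
    subgoal by simp
    subgoal by simp
    subgoal using d by simp
    subgoal using B by blast
    done
next
  case False
  let ?t = "card (TT v)"
  have "TT v \<noteq> {}" using TT_empty_eq vl vz by blast
  hence "?t \<noteq> 0" by simp
  hence t2: "?t \<ge> 2" using False by presburger
  have td: "?t \<le> d" using TT_card vl by metis
  obtain i j where ij: "i \<in> TT v" "j \<in> TT v" "i \<noteq> j" using two_elems[OF TT_fin t2] by blast
  have il: "i < d" "v ! i" and jl: "j < d" "v ! j" using ij vl by (auto simp: TT_def)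
  define u where "u = flip i v"
  have ul: "length u = d" using vl u_def by simp
  have adj: "hypercube_adj v u" using adj_flip il vl u_def by simp
  have TTu: "TT u = TT v - {i}" using TT_flip[of i v] il vl u_def by simp
  have uj: "u ! j" using jl ij il vl u_def by (simp add: flip_nth)
  have "TT (flip j u) = TT v - {i} - {j}" using TT_flip[of j u] TTu uj jl ul by simp
  hence "card (TT (flip j u)) = ?t - 2" using ij by (simp add: card_Diff_subset)
  hence c: "card (TT (flip j u)) = ?t - 2" .
  have ev: "even ?t" using False by blast
  hence "even (?t - 2)" using t2 by presburger
  hence "even (card (TT (flip j u)))" using c by metis
  hence "f1 d (flip j u) = d + 1 - card (TT (flip j u))" unfolding f1_def by (rule F1_even)
  moreover have "f1 d v = d + 1 - ?t" unfolding f1_def by (rule F1_even[OF ev])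
  ultimately have gt: "f1 d (flip j u) > f1 d v" using c t2 td by linarith
  have fi: "flip i u = v" using u_def by simp
  have cc: "card {i, j} + (d - 1) > d" using ij d by simp
  show ?thesis
    apply (intro exI[of _ u] conjI exI[of _ "{i, j}"])
    subgoal using ul by simp
    subgoal using adj by simp
    subgoal using il jl by simp
    subgoal using cc by simp
    subgoal using fi gt by blast
    done
qed


definition F2 :: "nat \<Rightarrow> nat \<Rightarrow> bool \<Rightarrow> nat" where
  "F2 d t z = (if odd t then 0 else if 3 \<le> t then 2 * d - t else if z then 2 * d + 1 else 2 * d)"

definition f2 :: "nat \<Rightarrow> bool list \<Rightarrow> nat" where
  "f2 d x = F2 d (card (TT x)) (0 \<in> TT x)"

lemma F2_odd: "odd t \<Longrightarrow> F2 d t z = 0"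
  by (simp add: F2_def)

lemma F2_big: "even t \<Longrightarrow> 3 \<le> t \<Longrightarrow> F2 d t z = 2 * d - t"
  by (simp add: F2_def)

lemma F2_ge: "even t \<Longrightarrow> F2 d t z \<ge> 2 * d - t"
  by (auto simp: F2_def)

lemma F2_pos: "even t \<Longrightarrow> t \<le> d \<Longrightarrow> F2 d t z \<ge> d"
  using F2_ge[of t d z] by linarith

lemma f2_even_pos: "even (card (TT x)) \<Longrightarrow> card (TT x) \<le> d \<Longrightarrow> f2 d x \<ge> d"
  unfolding f2_def by (rule F2_pos)

lemma wit2:
  assumes d: "d > 2" and vl: "length v = d" and vz: "v \<noteq> replicate d False" and vx: "v \<noteq> x01 d"
  shows "\<exists>u. length u = d \<and> (u = v \<or> hypercube_adj v u) \<and>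
       (\<exists>P \<subseteq> {..<d}. card P + (d - 2) > d \<and>
          (\<forall>p\<in>P. flip p u = replicate d False \<or> flip p u = x01 d \<or> flip p u = v \<or> f2 d (flip p u) > f2 d v))"
proof (cases "odd (card (TT v))")
  case True
  have "\<forall>p\<in>{..<d}. f2 d (flip p v) > f2 d v"
  proof
    fix p assume "p \<in> {..<d}"
    hence p: "p < length v" using vl by simp
    have e: "even (card (TT v) - 1)" "even (card (TT v) + 1)" using True by presburger+
    have "even (card (TT (flip p v)))" using TT_card_flip[OF p] e
      by (cases "v ! p") simp_all
    moreover have "card (TT (flip p v)) \<le> d" using TT_card[of "flip p v"] vl by simp
    ultimately have "f2 d (flip p v) \<ge> d" by (rule f2_even_pos)
    moreover have "f2 d v = 0" unfolding f2_def by (rule F2_odd[OF True])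
    ultimately show "f2 d (flip p v) > f2 d v" using d by linarith
  qed
  hence B: "\<forall>p\<in>{..<d}. flip p v = replicate d False \<or> flip p v = x01 d \<or> flip p v = v \<or> f2 d (flip p v) > f2 d v" by blast
  show ?thesis
    apply (intro exI[of _ v] conjI exI[of _ "{..<d}"])
    subgoal using vl by simp
    subgoal by simp
    subgoal by simp
    subgoal using d by simp
    subgoal using B by blast
    done
next
  case False
  let ?t = "card (TT v)"
  have "TT v \<noteq> {}" using TT_empty_eq vl vz by blast
  hence "?t \<noteq> 0" by simp
  hence t2: "?t \<ge> 2" using False by presburger
  have td: "?t \<le> d" using TT_card vl by metis
  show ?thesis
  proof (cases "?t \<ge> 3")
    case True
    hence t4: "?t \<ge> 4" using False by presburger
    obtain i j l where ij: "i \<in> TT v" "j \<in> TT v" "l \<in> TT v" "i \<noteq> j" "i \<noteq> l" "j \<noteq> l"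
      using three_elems[OF TT_fin, of v] True by blast
    have il: "i < d" "v ! i" and jl: "j < d" "v ! j" and ll: "l < d" "v ! l"
      using ij vl by (auto simp: TT_def)
    define u where "u = flip i v"
    have ul: "length u = d" using vl u_def by simp
    have adj: "hypercube_adj v u" using adj_flip il vl u_def by simp
    have TTu: "TT u = TT v - {i}" using TT_flip[of i v] il vl u_def by simp
    have gen: "f2 d (flip q u) > f2 d v" if q: "q \<in> TT v" "q \<noteq> i" for q
    proof -
      have ql: "q < d" "v ! q" using q vl by (auto simp: TT_def)
      have uq: "u ! q" using ql q il vl u_def by (simp add: flip_nth)
      have "TT (flip q u) = TT v - {i} - {q}" using TT_flip[of q u] TTu uq ql ul by simp
      hence c: "card (TT (flip q u)) = ?t - 2" using ij q by (simp add: card_Diff_subset)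
      have ev: "even (?t - 2)" using False t4 by presburger
      have "even (card (TT (flip q u)))" using ev c by metis
      hence "f2 d (flip q u) \<ge> 2 * d - card (TT (flip q u))" unfolding f2_def by (rule F2_ge)
      hence "f2 d (flip q u) \<ge> 2 * d - (?t - 2)" using c by metis
      moreover have "even ?t" using False by blast
      hence "f2 d v = 2 * d - ?t" unfolding f2_def using True by (rule F2_big)
      ultimately show ?thesis using t4 td by linarith
    qed
    have fi: "flip i u = v" using u_def by simp
    have cc: "card {i, j, l} + (d - 2) > d" using ij d by simp
    have gj: "f2 d (flip j u) > f2 d v" using gen[of j] ij by blast
    have gl: "f2 d (flip l u) > f2 d v" using gen[of l] ij by blast
    show ?thesis
      apply (intro exI[of _ u] conjI exI[of _ "{i, j, l}"])
      subgoal using ul by simp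
      subgoal using adj by simp
      subgoal using il jl ll by simp
      subgoal using cc by simp
      subgoal using fi gj gl by blast
      done
  next
    case t3: False
    hence "?t = 2" using t2 by linarith
    then obtain x y where xy: "TT v = {x, y}" "x \<noteq> y" unfolding card_2_iff by blast
    obtain a b where ab: "TT v = {a, b}" "a < b"
    proof (cases "x < y")
      case True thus ?thesis using xy that by blast
    next
      case False hence "y < x" using xy(2) by linarith
      moreover have "TT v = {y, x}" using xy(1) by blast
      ultimately show ?thesis using that by blast
    qed
    have aT: "a \<in> TT v" and bT: "b \<in> TT v" using ab(1) by blast+
    have al: "a < d" "v ! a" using aT vl unfolding TT_def by blast+
    have bl: "b < d" "v ! b" using bT vl unfolding TT_def by blast+
    have anb: "a \<noteq> b" using ab(2) by simp
    define u where "u = flip b v"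
    have ul: "length u = d" using vl u_def by simp
    have adj: "hypercube_adj v u" using adj_flip bl vl u_def by simp
    have "TT u = TT v - {b}" using TT_flip[of b v] bl vl u_def by simp
    hence TTu: "TT u = {a}" using ab(1) anb by blast
    have "a \<in> TT u" using TTu by blast
    hence ua: "u ! a" unfolding TT_def by blast
    have fa: "flip a u = replicate d False"
      using TT_flip[of a u] TTu ua al ul TT_empty_eq[of "flip a u" d] by simp
    have fb: "flip b u = v" using u_def by simp
    have d1: "1 < d" using d by simp
    show ?thesis
    proof (cases "a = 0")
      case True
      hence b1: "b \<noteq> 1" using vx TT_x01_eq[of d v] vl d ab by auto
      have "1 \<notin> TT u" using TTu True by simp
      hence u1: "\<not> u ! 1" using d1 ul unfolding TT_def by simp
      have "TT (flip 1 u) = {0, 1}" using TT_flip[of 1 u] TTu True u1 ul d1 by auto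
      hence f1': "flip 1 u = x01 d" using TT_x01_eq[of d "flip 1 u"] ul d by simp
      have cc: "card {0, 1, b} + (d - 2) > d" using ab True b1 d by simp
      have fz: "flip 0 u = replicate d False" using fa True by simp
      show ?thesis
        apply (intro exI[of _ u] conjI exI[of _ "{0, 1, b}"])
        subgoal using ul by simp
        subgoal using adj by simp
        subgoal using d1 bl by simp
        subgoal using cc by simp
        subgoal using fz fb f1' by blast
        done
    next
      case False
      have "0 \<notin> TT u" using TTu False by simp
      hence u0: "\<not> u ! 0" using d ul unfolding TT_def by simp
      have T0: "TT (flip 0 u) = {0, a}" using TT_flip[of 0 u] TTu u0 ul d by auto
      have f0: "flip 0 u = x01 d \<or> f2 d (flip 0 u) > f2 d v"
      proof (cases "a = 1")
        case True thus ?thesis using T0 TT_x01_eq[of d "flip 0 u"] ul d by simp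
      next
        case a1: False
        have c0: "card (TT (flip 0 u)) = 2" using T0 False by simp
        have "f2 d (flip 0 u) = F2 d 2 True" unfolding f2_def using c0 T0 by (metis insertI1)
        also have "\<dots> = 2 * d + 1" by (simp add: F2_def)
        finally have "f2 d (flip 0 u) = 2 * d + 1" .
        moreover have "0 \<notin> TT v" using ab False by auto
        hence "f2 d v = F2 d 2 False" unfolding f2_def using \<open>?t = 2\<close> by metis
        hence "f2 d v = 2 * d" by (simp add: F2_def)
        ultimately show ?thesis by simp
      qed
      have cc: "card {0, a, b} + (d - 2) > d" using ab False d by simp
      show ?thesis
        apply (intro exI[of _ u] conjI exI[of _ "{0, a, b}"])
        subgoal using ul by simp
        subgoal using adj by simp
        subgoal using d al bl by simp
        subgoal using cc by simp
        subgoal using fa fb f0 by blast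
        done
    qed
  qed
qed


lemma cons1:
  assumes d: "d > 2"
  shows "\<exists>S. is_kL_sequence (hypercube_vertices d) hypercube_adj (d - 1) S \<and> length S = 2 ^ d - 1"
proof -
  let ?V = "hypercube_vertices d" and ?z = "replicate d False"
  obtain xs where xs: "set xs = ?V - {?z}" "distinct xs"
    using finite_distinct_list[of "?V - {?z}"] fin_V by blast
  define S where "S = sort_key (f1 d) xs"
  have zV: "?z \<in> ?V" by (simp add: hypercube_vertices_def)
  have "length S = card (?V - {?z})" using xs S_def by (simp add: distinct_card[symmetric])
  also have "\<dots> = 2 ^ d - 1" using zV card_V fin_V by simp
  finally have len: "length S = 2 ^ d - 1" .
  have "is_kL_sequence ?V hypercube_adj (d - 1) S"
  proof (rule key_seq[where f = "f1 d"])
    show "distinct S" using xs S_def by simp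
    show "set S \<subseteq> ?V" using xs S_def by auto
    show "sorted (map (f1 d) S)" using S_def by simp
    fix v assume "v \<in> set S"
    hence "length v = d" "v \<noteq> ?z" using xs S_def by (auto simp: hypercube_vertices_def)
    from wit1[OF d this] show "\<exists>u. length u = d \<and> (u = v \<or> hypercube_adj v u) \<and>
       (\<exists>P \<subseteq> {..<d}. card P + (d - 1) > d \<and>
          (\<forall>p\<in>P. flip p u \<notin> set S \<or> flip p u = v \<or> f1 d (flip p u) > f1 d v))" by blast
  qed
  thus ?thesis using len by blast
qed

lemma cons2:
  assumes d: "d > 2"
  shows "\<exists>S. is_kL_sequence (hypercube_vertices d) hypercube_adj (d - 2) S \<and> length S = 2 ^ d - 2"
proof -
  let ?V = "hypercube_vertices d" and ?z = "replicate d False"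
  obtain xs where xs: "set xs = ?V - {?z, x01 d}" "distinct xs"
    using finite_distinct_list[of "?V - {?z, x01 d}"] fin_V by blast
  define S where "S = sort_key (f2 d) xs"
  have zV: "{?z, x01 d} \<subseteq> ?V" using d by (simp add: hypercube_vertices_def x01_len)
  have zx: "?z \<noteq> x01 d" using d by (cases d) (auto simp: x01_def)
  have "length S = card (?V - {?z, x01 d})" using xs S_def by (simp add: distinct_card[symmetric])
  also have "\<dots> = 2 ^ d - 2" using zV card_V fin_V zx by (simp add: card_Diff_subset)
  finally have len: "length S = 2 ^ d - 2" .
  have "is_kL_sequence ?V hypercube_adj (d - 2) S"
  proof (rule key_seq[where f = "f2 d"])
    show "distinct S" using xs S_def by simp
    show "set S \<subseteq> ?V" using xs S_def by auto
    show "sorted (map (f2 d) S)" using S_def by simp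
    fix v assume "v \<in> set S"
    hence "length v = d" "v \<noteq> ?z" "v \<noteq> x01 d" using xs S_def by (auto simp: hypercube_vertices_def)
    from wit2[OF d this] obtain u where u: "length u = d" "u = v \<or> hypercube_adj v u"
      and P: "\<exists>P \<subseteq> {..<d}. card P + (d - 2) > d \<and>
          (\<forall>p\<in>P. flip p u = ?z \<or> flip p u = x01 d \<or> flip p u = v \<or> f2 d (flip p u) > f2 d v)"
      by blast
    from P obtain P where Ps: "P \<subseteq> {..<d}" "card P + (d - 2) > d"
      and Pa: "\<forall>p\<in>P. flip p u = ?z \<or> flip p u = x01 d \<or> flip p u = v \<or> f2 d (flip p u) > f2 d v"
      by blast
    have ex: "flip p u = ?z \<or> flip p u = x01 d \<Longrightarrow> flip p u \<notin> set S" for p using xs S_def by auto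
    have "\<forall>p\<in>P. flip p u \<notin> set S \<or> flip p u = v \<or> f2 d (flip p u) > f2 d v"
    proof
      fix p assume "p \<in> P"
      hence "flip p u = ?z \<or> flip p u = x01 d \<or> flip p u = v \<or> f2 d (flip p u) > f2 d v" using Pa by blast
      thus "flip p u \<notin> set S \<or> flip p u = v \<or> f2 d (flip p u) > f2 d v" using ex[of p] by blast
    qed
    thus "\<exists>u. length u = d \<and> (u = v \<or> hypercube_adj v u) \<and>
       (\<exists>P \<subseteq> {..<d}. card P + (d - 2) > d \<and>
          (\<forall>p\<in>P. flip p u \<notin> set S \<or> flip p u = v \<or> f2 d (flip p u) > f2 d v))"
      using u Ps by blast
  qed
  thus ?thesis using len by blast
qed

lemma max_len:
  assumes ub: "\<And>S. is_kL_sequence (hypercube_vertices d) hypercube_adj k S \<Longrightarrow> length S \<le> m"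
    and ex: "\<exists>S. is_kL_sequence (hypercube_vertices d) hypercube_adj k S \<and> length S = m"
  shows "grundy_L_k (hypercube_vertices d) hypercube_adj k = m"
  unfolding grundy_L_k_def
proof (rule Max_eqI)
  show "finite {length S |S. is_kL_sequence (hypercube_vertices d) hypercube_adj k S}"
    by (rule finite_subset[of _ "{..m}"]) (auto dest: ub)
next
  fix x assume "x \<in> {length S |S. is_kL_sequence (hypercube_vertices d) hypercube_adj k S}"
  thus "x \<le> m" using ub by blast
next
  show "m \<in> {length S |S. is_kL_sequence (hypercube_vertices d) hypercube_adj k S}" using ex by blast
qed

theorem mainTheorem11:
  fixes d :: nat
  assumes "d > 2"
  shows "grundy_L_k (hypercube_vertices d) hypercube_adj (d - 1) = 2 ^ d - 1
       \<and> grundy_L_k (hypercube_vertices d) hypercube_adj (d - 2) = 2 ^ d - 2"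
proof
  show "grundy_L_k (hypercube_vertices d) hypercube_adj (d - 1) = 2 ^ d - 1"
  proof (rule max_len[OF _ cons1[OF assms]])
    fix S assume "is_kL_sequence (hypercube_vertices d) hypercube_adj (d - 1) S"
    thus "length S \<le> 2 ^ d - 1" using upper[of d "d - 1" S] assms by (cases "S = []") auto
  qed
  show "grundy_L_k (hypercube_vertices d) hypercube_adj (d - 2) = 2 ^ d - 2"
  proof (rule max_len[OF _ cons2[OF assms]])
    fix S assume "is_kL_sequence (hypercube_vertices d) hypercube_adj (d - 2) S"
    thus "length S \<le> 2 ^ d - 2" using upper[of d "d - 2" S] assms by (cases "S = []") auto
  qed
qed

end
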